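(* Let $G$ be a graph with $n$ vertices and maximum degree $\Delta$. Then for every positive integer $q\leq n-\Delta-1$, $\eta(G\lor K_q)=\max\{\eta(G),q\}$.
   Context: All graphs are finite, simple and undirected. $K_q$ is the complete graph on $q$ vertices. For disjoint graphs $G_1,G_2$, the join $G_1\lor G_2$ has vertex set $V(G_1)\cup V(G_2)$ and edge set $E(G_1)\cup E(G_2)\cup\{(u,v):u\in V(G_1),v\in V(G_2)\}$. For a vertex $v$, $N(v)$ is its set of neighbours. For a positive integer $k$, $[k]=\{1,\dots,k\}$. For a labeling $f:V(G)\to[k]$ and $S\subseteq V(G)$, $f(S)=\sum_{u\in S}f(u)$. A labeling $f:V(G)\to[k]$ is an additive $k$-coloring if $f(N(u))\neq f(N(v))$ for every edge $(u,v)$ of $G$. The additive chromatic number $\eta(G)$ is the least $k$ for which $G$ has an additive $k$-coloring. *)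

theory Defs
  imports Main
begin

definition simple_graph :: "'a set \<Rightarrow> ('a \<Rightarrow> 'a \<Rightarrow> bool) \<Rightarrow> bool" where
  "simple_graph V E \<longleftrightarrow> finite V \<and> (\<forall>u v. E u v \<longrightarrow> u \<in> V \<and> v \<in> V)
     \<and> (\<forall>u v. E u v \<longrightarrow> E v u) \<and> (\<forall>u. \<not> E u u)"

definition nbhd :: "'a set \<Rightarrow> ('a \<Rightarrow> 'a \<Rightarrow> bool) \<Rightarrow> 'a \<Rightarrow> 'a set" where
  "nbhd V E u = {v \<in> V. E u v}"

definition max_degree :: "'a set \<Rightarrow> ('a \<Rightarrow> 'a \<Rightarrow> bool) \<Rightarrow> nat" where
  "max_degree V E = Max (insert 0 ((\<lambda>v. card (nbhd V E v)) ` V))"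

definition additive_coloring :: "'a set \<Rightarrow> ('a \<Rightarrow> 'a \<Rightarrow> bool) \<Rightarrow> nat \<Rightarrow> ('a \<Rightarrow> nat) \<Rightarrow> bool" where
  "additive_coloring V E k f \<longleftrightarrow> (\<forall>v\<in>V. f v \<in> {1..k})
     \<and> (\<forall>u\<in>V. \<forall>v\<in>V. E u v \<longrightarrow> sum f (nbhd V E u) \<noteq> sum f (nbhd V E v))"

definition eta :: "'a set \<Rightarrow> ('a \<Rightarrow> 'a \<Rightarrow> bool) \<Rightarrow> nat" where
  "eta V E = (LEAST k. k \<ge> 1 \<and> (\<exists>f. additive_coloring V E k f))"

definition join_K_verts :: "'a set \<Rightarrow> nat \<Rightarrow> ('a + nat) set" where
  "join_K_verts V q = Inl ` V \<union> Inr ` {..<q}"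

fun join_K_edges :: "'a set \<Rightarrow> ('a \<Rightarrow> 'a \<Rightarrow> bool) \<Rightarrow> nat \<Rightarrow> ('a + nat) \<Rightarrow> ('a + nat) \<Rightarrow> bool" where
  "join_K_edges V E q (Inl a) (Inl b) = E a b"
| "join_K_edges V E q (Inr i) (Inr j) = (i < q \<and> j < q \<and> i \<noteq> j)"
| "join_K_edges V E q (Inl a) (Inr j) = (a \<in> V \<and> j < q)"
| "join_K_edges V E q (Inr i) (Inl b) = (b \<in> V \<and> i < q)"

end

theory Submission
  imports Defs "HOL-Library.Nat_Bijection"
begin

lemma nb_sub: "simple_graph V E \<Longrightarrow> nbhd V E v \<subseteq> V"
  by (auto simp: nbhd_def)

lemma nb_fin: "simple_graph V E \<Longrightarrow> finite (nbhd V E v)"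
  by (meson finite_subset nb_sub simple_graph_def)

lemma nbhd_Inl:
  assumes "simple_graph V E" "v \<in> V"
  shows "nbhd (join_K_verts V q) (join_K_edges V E q) (Inl v) = Inl ` nbhd V E v \<union> Inr ` {..<q}"
proof (rule set_eqI)
  fix x show "x \<in> nbhd (join_K_verts V q) (join_K_edges V E q) (Inl v) \<longleftrightarrow> x \<in> Inl ` nbhd V E v \<union> Inr ` {..<q}"
    using assms by (cases x) (auto simp: nbhd_def join_K_verts_def simple_graph_def)
qed

lemma nbhd_Inr:
  assumes "i < q"
  shows "nbhd (join_K_verts V q) (join_K_edges V E q) (Inr i) = Inl ` V \<union> Inr ` ({..<q} - {i})"
proof (rule set_eqI)
  fix x show "x \<in> nbhd (join_K_verts V q) (join_K_edges V E q) (Inr i) \<longleftrightarrow> x \<in> Inl ` V \<union> Inr ` ({..<q} - {i})"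
    using assms by (cases x) (auto simp: nbhd_def join_K_verts_def)
qed

lemma sum_LR:
  assumes "finite A" "finite B"
  shows "sum f (Inl ` A \<union> Inr ` B) = sum (f \<circ> Inl) A + sum (f \<circ> Inr) B"
proof -
  have "sum f (Inl ` A \<union> Inr ` B) = sum f (Inl ` A) + sum f (Inr ` B)"
    using assms by (intro sum.union_disjoint) auto
  also have "\<dots> = sum (f \<circ> Inl) A + sum (f \<circ> Inr) B"
    by (simp add: sum.reindex)
  finally show ?thesis .
qed

lemma L1:
  assumes "simple_graph V E" "v \<in> V"
  shows "sum f (nbhd (join_K_verts V q) (join_K_edges V E q) (Inl v))
     = sum (f \<circ> Inl) (nbhd V E v) + sum (f \<circ> Inr) {..<q}"
  using assms by (simp add: nbhd_Inl sum_LR nb_fin)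

lemma L2:
  assumes "simple_graph V E" "i < q"
  shows "sum f (nbhd (join_K_verts V q) (join_K_edges V E q) (Inr i)) + f (Inr i)
     = sum (f \<circ> Inl) V + sum (f \<circ> Inr) {..<q}"
proof -
  have fV: "finite V" using assms(1) simple_graph_def by blast
  have "sum (f \<circ> Inr) {..<q} = sum (f \<circ> Inr) ({..<q} - {i}) + f (Inr i)"
    using assms(2) by (simp add: sum.remove[of "{..<q}" i] add.commute)
  then show ?thesis using assms fV by (simp add: nbhd_Inr sum_LR add.assoc)
qed

lemma mono_col: "additive_coloring V E k f \<Longrightarrow> k \<le> k' \<Longrightarrow> additive_coloring V E k' f"
  unfolding additive_coloring_def by force

lemma exists_col:
  assumes "simple_graph V E"
  shows "\<exists>k. k \<ge> 1 \<and> (\<exists>f. additive_coloring V E k f)"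
proof -
  have fV: "finite V" using assms simple_graph_def by blast
  obtain h where h: "bij_betw h V {0..<card V}" using ex_bij_betw_finite_nat[OF fV] by blast
  have inj: "inj_on h V" using h bij_betw_def by blast
  define f where "f v = (2::nat) ^ h v" for v
  have s: "sum f (nbhd V E u) = set_encode (h ` nbhd V E u)" for u
  proof -
    have "inj_on h (nbhd V E u)" using inj nb_sub[OF assms] inj_on_subset by blast
    then show ?thesis by (simp add: set_encode_def sum.reindex f_def o_def)
  qed
  have "additive_coloring V E (2 ^ card V) f"
    unfolding additive_coloring_def
  proof (intro conjI ballI impI)
    fix v assume "v \<in> V"
    then have "h v \<in> {0..<card V}" using h bij_betwE by blast
    then have "h v \<le> card V" by simp
    then have "(2::nat) ^ h v \<le> 2 ^ card V" by (rule power_increasing) simp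
    then show "f v \<in> {1..2 ^ card V}" by (simp add: f_def)
  next
    fix u v assume uv: "u \<in> V" "v \<in> V" "E u v"
    show "sum f (nbhd V E u) \<noteq> sum f (nbhd V E v)"
    proof
      assume "sum f (nbhd V E u) = sum f (nbhd V E v)"
      then have "set_encode (h ` nbhd V E u) = set_encode (h ` nbhd V E v)" by (simp add: s)
      then have "h ` nbhd V E u = h ` nbhd V E v"
      proof (rule inj_onD[OF inj_on_set_encode])
        show "h ` nbhd V E u \<in> Collect finite" "h ` nbhd V E v \<in> Collect finite"
          using nb_fin[OF assms] by auto
      qed
      then have "nbhd V E u = nbhd V E v"
        using inj nb_sub[OF assms] by (simp add: inj_on_image_eq_iff)
      moreover have "v \<in> nbhd V E u" using uv by (simp add: nbhd_def)
      moreover have "v \<notin> nbhd V E v" using assms by (simp add: nbhd_def simple_graph_def)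
      ultimately show False by simp
    qed
  qed
  moreover have "(1::nat) \<le> 2 ^ card V" by simp
  ultimately show ?thesis by blast
qed

theorem mainTheorem4:
  fixes V :: "'a set" and E :: "'a \<Rightarrow> 'a \<Rightarrow> bool" and q :: nat
  assumes "simple_graph V E"
    and "q \<ge> 1"
    and "q + max_degree V E + 1 \<le> card V"
  shows "eta (join_K_verts V q) (join_K_edges V E q) = max (eta V E) q"
proof -
  let ?VH = "join_K_verts V q" and ?EH = "join_K_edges V E q"
  have G: "simple_graph V E" by fact
  have fV: "finite V" using G simple_graph_def by blast
  have deg: "card (nbhd V E v) \<le> max_degree V E" if "v \<in> V" for v
    unfolding max_degree_def using that fV by (intro Max_ge) auto
  have HtoG: "(\<exists>f. additive_coloring V E k f) \<and> q \<le> k"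
    if "additive_coloring ?VH ?EH k f" for k f
  proof
    show "\<exists>f. additive_coloring V E k f"
    proof (intro exI[of _ "f \<circ> Inl"])
      show "additive_coloring V E k (f \<circ> Inl)"
        unfolding additive_coloring_def
      proof (intro conjI ballI impI)
        fix v assume "v \<in> V" then show "(f \<circ> Inl) v \<in> {1..k}"
          using that by (auto simp: additive_coloring_def join_K_verts_def)
      next
        fix u v assume uv: "u \<in> V" "v \<in> V" "E u v"
        then have "sum f (nbhd ?VH ?EH (Inl u)) \<noteq> sum f (nbhd ?VH ?EH (Inl v))"
          using that by (auto simp: additive_coloring_def join_K_verts_def)
        then show "sum (f \<circ> Inl) (nbhd V E u) \<noteq> sum (f \<circ> Inl) (nbhd V E v)"
          using uv G by (simp add: L1)
      qed
    qed
  next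
    have inj: "inj_on (f \<circ> Inr) {..<q}"
    proof (rule inj_onI)
      fix i j assume ij: "i \<in> {..<q}" "j \<in> {..<q}" "(f \<circ> Inr) i = (f \<circ> Inr) j"
      show "i = j"
      proof (rule ccontr)
        assume "i \<noteq> j"
        then have "sum f (nbhd ?VH ?EH (Inr i)) \<noteq> sum f (nbhd ?VH ?EH (Inr j))"
          using that ij by (auto simp: additive_coloring_def join_K_verts_def)
        moreover have "sum f (nbhd ?VH ?EH (Inr i)) + f (Inr i) = sum f (nbhd ?VH ?EH (Inr j)) + f (Inr j)"
          using L2[OF G, of i q f] L2[OF G, of j q f] ij by simp
        ultimately show False using ij by simp
      qed
    qed
    moreover have "(f \<circ> Inr) ` {..<q} \<subseteq> {1..k}"
      using that by (auto simp: additive_coloring_def join_K_verts_def)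
    ultimately have "card {..<q} \<le> card {1..k}" by (intro card_inj_on_le[of "f \<circ> Inr"]) auto
    then show "q \<le> k" by simp
  qed
  have GtoH: "\<exists>f. additive_coloring ?VH ?EH k f"
    if g: "additive_coloring V E k g" and qk: "q \<le> k" for k g
  proof -
    define f where "f = case_sum g (\<lambda>i. Suc i)"
    have fl: "f \<circ> Inl = g" and fr: "f \<circ> Inr = Suc" by (auto simp: f_def)
    define T where "T = sum Suc {..<q}"
    have gV: "\<forall>v\<in>V. g v \<in> {1..k}" and gE: "\<forall>u\<in>V. \<forall>v\<in>V. E u v \<longrightarrow> sum g (nbhd V E u) \<noteq> sum g (nbhd V E v)"
      using g unfolding additive_coloring_def by blast+
    have gpos: "v \<in> V \<Longrightarrow> g v \<ge> 1" for v using gV by auto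
    have big: "sum g (nbhd V E u) + Suc j < sum g V" if "u \<in> V" "j < q" for u j
    proof -
      have sub: "nbhd V E u \<subseteq> V" by (rule nb_sub[OF G])
      have "sum g V = sum g (nbhd V E u) + sum g (V - nbhd V E u)"
        using sum.subset_diff[OF sub fV, of g] by (simp only: add.commute)
      moreover have "card (V - nbhd V E u) \<le> sum g (V - nbhd V E u)"
      proof -
        have "(\<Sum>v\<in>V - nbhd V E u. (1::nat)) \<le> sum g (V - nbhd V E u)"
          by (rule sum_mono) (use gpos in force)
        then show ?thesis by simp
      qed
      moreover have "card (V - nbhd V E u) = card V - card (nbhd V E u)"
        using card_Diff_subset[OF nb_fin[OF G] sub] .
      moreover have "card (nbhd V E u) \<le> max_degree V E" using deg that by blast
      ultimately show ?thesis using assms(3) \<open>j < q\<close> by linarith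
    qed
    have "additive_coloring ?VH ?EH k f"
      unfolding additive_coloring_def
    proof (intro conjI ballI impI)
      fix x assume "x \<in> ?VH" then show "f x \<in> {1..k}"
        using gV qk by (auto simp: join_K_verts_def f_def)
    next
      fix x y assume x: "x \<in> ?VH" and y: "y \<in> ?VH" and e: "?EH x y"
      show "sum f (nbhd ?VH ?EH x) \<noteq> sum f (nbhd ?VH ?EH y)"
      proof (cases x)
        case (Inl u)
        note xu = Inl
        then have u: "u \<in> V" using x by (auto simp: join_K_verts_def)
        have sx: "sum f (nbhd ?VH ?EH x) = sum g (nbhd V E u) + T"
          using L1[OF G u, of f q] xu by (simp add: fl fr T_def)
        show ?thesis
        proof (cases y)
          case (Inl v)
          then have v: "v \<in> V" using y by (auto simp: join_K_verts_def)
          have "sum f (nbhd ?VH ?EH y) = sum g (nbhd V E v) + T"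
            using L1[OF G v, of f q] Inl by (simp add: fl fr T_def)
          moreover have "sum g (nbhd V E u) \<noteq> sum g (nbhd V E v)"
            using gE u v e xu Inl by simp
          ultimately show ?thesis using sx by simp
        next
          case (Inr j)
          then have j: "j < q" using y by (auto simp: join_K_verts_def)
          have "sum f (nbhd ?VH ?EH y) + Suc j = sum g V + T"
            using L2[OF G j, of f] Inr by (simp add: fl fr T_def f_def)
          then show ?thesis using sx big[OF u j] by linarith
        qed
      next
        case (Inr i)
        note xi = Inr
        then have i: "i < q" using x by (auto simp: join_K_verts_def)
        have sx: "sum f (nbhd ?VH ?EH x) + Suc i = sum g V + T"
          using L2[OF G i, of f] xi by (simp add: fl fr T_def f_def)
        show ?thesis
        proof (cases y)
          case (Inl v)
          then have v: "v \<in> V" using y by (auto simp: join_K_verts_def)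
          have "sum f (nbhd ?VH ?EH y) = sum g (nbhd V E v) + T"
            using L1[OF G v, of f q] Inl by (simp add: fl fr T_def)
          then show ?thesis using sx big[OF v i] by linarith
        next
          case (Inr j)
          then have j: "j < q" using y by (auto simp: join_K_verts_def)
          have sy: "sum f (nbhd ?VH ?EH y) + Suc j = sum g V + T"
            using L2[OF G j, of f] Inr by (simp add: fl fr T_def f_def)
          have "i \<noteq> j" using e xi Inr by simp
          then show ?thesis using sx sy by linarith
        qed
      qed
    qed
    then show ?thesis by blast
  qed
  let ?P = "\<lambda>k. k \<ge> 1 \<and> (\<exists>f. additive_coloring V E k f)"
  have ex: "\<exists>k. ?P k" by (rule exists_col[OF G])
  define m where "m = eta V E"
  have Pm: "?P m" unfolding m_def eta_def using ex by (rule LeastI_ex)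
  have mle: "?P k \<Longrightarrow> m \<le> k" for k unfolding m_def eta_def by (rule Least_le)
  have "eta ?VH ?EH = max m q"
    unfolding eta_def
  proof (rule Least_equality)
    show "1 \<le> max m q \<and> (\<exists>f. additive_coloring ?VH ?EH (max m q) f)"
    proof -
      obtain g where "additive_coloring V E m g" using Pm by blast
      then have "additive_coloring V E (max m q) g" by (rule mono_col) simp
      then have "\<exists>f. additive_coloring ?VH ?EH (max m q) f" by (rule GtoH) simp
      moreover have "1 \<le> max m q" using Pm by (simp add: le_max_iff_disj)
      ultimately show ?thesis by blast
    qed
  next
    fix k assume "1 \<le> k \<and> (\<exists>f. additive_coloring ?VH ?EH k f)"
    then obtain f where k1: "1 \<le> k" and f: "additive_coloring ?VH ?EH k f" by blast
    from HtoG[OF f] have "(\<exists>f. additive_coloring V E k f)" and "q \<le> k" by auto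
    then have "m \<le> k" using k1 mle by blast
    then show "max m q \<le> k" using \<open>q \<le> k\<close> by simp
  qed
  then show ?thesis by (simp add: m_def)
qed

end
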